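(* Let $y_D$ be a real random variable with continuous cumulative distribution function $F$, and let $\gamma\in(0,1)\cap\mathbb{Q}$ with irreducible fraction $\gamma=\frac{n_1}{n_2}$. Let $\epsilon\in(0,1)$ and $\rho\in(0,1)$ satisfy $4\gamma(1-\gamma)>9\rho\epsilon^2$ and $6\rho\le 1$. Set $$k=\left\lceil \frac{1}{n_2}\left(\frac{4\gamma(1-\gamma)}{9\rho\epsilon^2}-1\right)\right\rceil,\qquad N=kn_2-1 .$$ Let $y_{D,1},\dots,y_{D,N}$ be i.i.d. copies of $y_D$ with order statistics $y_{D,(1)}\le\dots\le y_{D,(N)}$, and let $\tilde J_D=y_{D,(\lfloor N\gamma\rfloor+1)}$. Then $$\mathrm{prob}\{|F(\tilde J_D)-\gamma|\le\epsilon\}\ge 1-\rho .$$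
   Context: For a finite sample $\{x_i\}_{i=1}^N$, the order statistics $x_{(1)}\le x_{(2)}\le\dots\le x_{(N)}$ are the sample values sorted increasingly. The irreducible fraction of a rational $\gamma$ is $\gamma=n_1/n_2$ with $n_1,n_2$ coprime positive integers. Known facts that may be used: if $y_{D,(m)}$ is the $m$th order statistic of $N$ i.i.d. samples with continuous CDF $F$, then $F(y_{D,(m)})\sim\mathrm{Beta}(m,N+1-m)$ (which is unimodal for $1\le m\le N$); and the Vysochanskij–Petunin inequality: for a unimodal random variable $X$ with finite mean and variance, $\mathrm{prob}\{|X-\mathbb E X|\ge \epsilon\}\le \frac{4\mathrm{Var}X}{9\epsilon^2}$ whenever $3\epsilon^2\ge 8\,\mathrm{Var}X$. *)

theory Defs
  imports "HOL-Probability.Probability"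
begin

definition order_stat :: "(nat \<Rightarrow> real) \<Rightarrow> nat \<Rightarrow> nat \<Rightarrow> real" where
  "order_stat x N m = sort (map x [1..<N+1]) ! (m - 1)"

end

theory Submission
  imports Defs
begin



lemma cubic_nonneg:
  fixes a b K Tv :: real
  assumes "a > 0" "b \<ge> 0" "K \<ge> 0" "4 * b^3 \<le> 9 * a * K^2" "Tv \<ge> 0"
  shows "a * Tv^3 / 3 - b * Tv + K \<ge> 0"
proof -
  define T0 where "T0 = sqrt (b / a)"
  have T0: "T0 \<ge> 0" "T0^2 = b / a" using assms by (auto simp: T0_def)
  have b: "b = a * T0^2" using T0 assms by (simp add: field_simps)
  have id: "a * Tv^3 / 3 - b * Tv + 2/3 * b * T0 = a/3 * (Tv - T0)^2 * (Tv + 2 * T0)"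
    unfolding b by (simp add: algebra_simps power2_eq_square power3_eq_cube divide_simps)
  have nn: "a/3 * (Tv - T0)^2 * (Tv + 2 * T0) \<ge> 0"
    using assms T0 by (metis add_nonneg_nonneg divide_nonneg_pos less_le mult_2 mult_nonneg_nonneg zero_le_numeral zero_le_power2 zero_less_numeral)
  have "(2/3 * b * T0)^2 = 4/9 * b^2 * T0^2" by (simp add: power2_eq_square)
  also have "\<dots> = 4/9 * b^2 * (b / a)" using T0 by simp
  also have "\<dots> = 4 * b^3 / (9 * a)" using assms by (simp add: field_simps power2_eq_square power3_eq_cube)
  also have "\<dots> \<le> K^2" using assms by (simp add: field_simps)
  finally have sq: "(2/3 * b * T0)^2 \<le> K^2" .
  have "2/3 * b * T0 \<le> K" using power2_le_imp_le[OF sq] assms(3) by blast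
  with id nn show ?thesis by linarith
qed

lemma Q10_pos:
  fixes v :: real assumes "0 \<le> v" "v \<le> 87/100"
  shows "0 \<le> 261/800 - 851/10800 * v - 22707/640000 * v^2 - 117479/480000 * v^3
     + 99312113/373248000000 * v^4 - 2523/20000 * v^5 + 59649143/6912000000 * v^6
     + 687097/48000000 * v^8 + 24389/4000000 * v^10"
proof -
  have p: "v^k \<le> (87/100)^k" for k using assms by (intro power_mono) auto
  have p2: "v^2 \<le> 7569/10000" using p[of 2] by (simp add: eval_nat_numeral)
  have p3: "v^3 \<le> 658503/1000000" using p[of 3] by (simp add: eval_nat_numeral)
  have p5: "v^5 \<le> 4984209207/10000000000" using p[of 5] by (simp add: eval_nat_numeral)
  have "v^4 \<ge> 0" "v^6 \<ge> 0" "v^8 \<ge> 0" "v^10 \<ge> 0" using assms by auto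
  then show ?thesis using assms p2 p3 p5 by linarith
qed

lemma D_poly:
  fixes v :: real
  defines "lam \<equiv> 29/100 * v^2"
  defines "al \<equiv> 4/9 + lam" and "c \<equiv> -3/8 * lam"
  defines "w \<equiv> al * v^3 / 3 + c * v"
  shows "9 * al * (1 - w)^2 - 4 * (1 - c)^3 = 4 * v^2 * (261/800 - 851/10800 * v - 22707/640000 * v^2 - 117479/480000 * v^3
     + 99312113/373248000000 * v^4 - 2523/20000 * v^5 + 59649143/6912000000 * v^6
     + 687097/48000000 * v^8 + 24389/4000000 * v^10)"
  unfolding lam_def al_def c_def w_def by algebra

definition alv :: "real \<Rightarrow> real" where "alv v = 4/9 + 29/100 * v^2"
definition cv :: "real \<Rightarrow> real" where "cv v = -3/8 * (29/100 * v^2)"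
definition Qc :: "real \<Rightarrow> real \<Rightarrow> real" where "Qc v x = alv v * x^3 / 3 + cv v * x"

lemma Qc_diff: "Qc v Tv - Qc v v = (Tv - v) * (alv v * (Tv^2 + Tv* v + v^2) / 3 + cv v)"
  unfolding Qc_def by (simp add: algebra_simps power2_eq_square power3_eq_cube diff_divide_distrib add_divide_distrib)

lemma F1: "alv v * v^2 / 4 + cv v \<ge> 0"
proof -
  have "alv v * v^2 / 4 + cv v = v^2 * (1/9 - 87/800 + 29/400 * v^2)"
    unfolding alv_def cv_def by (simp add: algebra_simps power2_eq_square)
  also have "\<dots> \<ge> 0" by (intro mult_nonneg_nonneg) auto
  finally show ?thesis .
qed

lemma second_factor: "alv v * (Tv^2 + Tv* v + v^2) / 3 + cv v \<ge> 0"
proof -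
  have "Tv^2 + Tv* v + v^2 \<ge> 3/4 * v^2"
  proof -
    have "Tv^2 + Tv* v + v^2 - 3/4 * v^2 = (Tv + v/2)^2" by (simp add: algebra_simps power2_eq_square)
    then show ?thesis by (metis diff_ge_0_iff_ge zero_le_power2)
  qed
  moreover have "alv v \<ge> 0" unfolding alv_def by simp
  ultimately have "alv v * (Tv^2 + Tv* v + v^2) / 3 \<ge> alv v * (3/4 * v^2) / 3"
    by (intro divide_right_mono mult_left_mono) auto
  with F1[of v] show ?thesis by simp
qed

lemma Qc_vv_nonneg: assumes "v \<ge> 0" shows "Qc v v \<ge> 0"
proof -
  have "Qc v v = v * (alv v * (0^2 + 0* v + v^2) / 3 + cv v)"
    by (simp add: Qc_def algebra_simps power2_eq_square power3_eq_cube)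
  then show ?thesis using assms second_factor[of v 0] by simp
qed

lemma cert_R_pos:
  assumes "0 \<le> v" "v \<le> 87/100" "Tv \<ge> v"
  shows "Qc v Tv - Qc v v - max 0 (Tv - 1) \<ge> 0"
proof (cases "Tv \<le> 1")
  case True
  have "Qc v Tv - Qc v v \<ge> 0" unfolding Qc_diff using assms second_factor[of v Tv] by simp
  with True show ?thesis by simp
next
  case False
  have al: "alv v > 0" unfolding alv_def by (simp add: add_pos_nonneg)
  have b: "1 - cv v \<ge> 0" unfolding cv_def by simp
  have v3: "v^3 \<le> 1" using assms power_le_one[of v 3] by simp
  have "alv v \<le> 1" unfolding alv_def using assms power_le_one[of v 2] by simp
  hence "alv v * v^3 \<le> 1" using v3 assms al by (simp add: mult_le_one)
  moreover have "cv v * v \<le> 0" unfolding cv_def using assms by (simp add: mult_nonpos_nonneg)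
  ultimately have K: "1 - Qc v v \<ge> 0" unfolding Qc_def by simp
  have "9 * alv v * (1 - Qc v v)^2 - 4 * (1 - cv v)^3 = 4 * v^2 * (261/800 - 851/10800 * v - 22707/640000 * v^2 - 117479/480000 * v^3
     + 99312113/373248000000 * v^4 - 2523/20000 * v^5 + 59649143/6912000000 * v^6
     + 687097/48000000 * v^8 + 24389/4000000 * v^10)"
    unfolding alv_def cv_def Qc_def by algebra
  moreover have "4 * v^2 * (261/800 - 851/10800 * v - 22707/640000 * v^2 - 117479/480000 * v^3
     + 99312113/373248000000 * v^4 - 2523/20000 * v^5 + 59649143/6912000000 * v^6
     + 687097/48000000 * v^8 + 24389/4000000 * v^10) \<ge> 0"
    using Q10_pos[OF assms(1,2)] by simp
  ultimately have "4 * (1 - cv v)^3 \<le> 9 * alv v * (1 - Qc v v)^2" by linarith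
  from cubic_nonneg[OF al b K this, of Tv] False
  have "alv v * Tv^3 / 3 - (1 - cv v) * Tv + (1 - Qc v v) \<ge> 0" by simp
  then show ?thesis using False unfolding Qc_def by (simp add: algebra_simps)
qed

lemma cert_L_pos:
  assumes "0 \<le> v" "v \<le> 87/100" "Tv \<le> v"
  shows "Qc v v - Qc v Tv - max 0 (-1 - Tv) \<ge> 0"
proof (cases "Tv \<ge> -1")
  case True
  have "Qc v Tv - Qc v v \<le> 0" unfolding Qc_diff using assms second_factor[of v Tv]
    by (simp add: mult_nonpos_nonneg)
  with True show ?thesis by simp
next
  case False
  have odd: "Qc v Tv = - Qc v (-Tv)" unfolding Qc_def by simp
  have "Qc v (-Tv) - Qc v v - max 0 (-Tv - 1) \<ge> 0" using cert_R_pos[of v "-Tv"] assms False by simp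
  with Qc_vv_nonneg[OF assms(1)] False show ?thesis unfolding odd by simp
qed

lemma Qc_even: "Qc (-v) x = Qc v x" unfolding Qc_def alv_def cv_def by simp

lemma cert_R:
  assumes "\<bar>v\<bar> \<le> 87/100" "Tv \<ge> v"
  shows "Qc v Tv - Qc v v - max 0 (Tv - 1) \<ge> 0"
proof (cases "v \<ge> 0")
  case True then show ?thesis using cert_R_pos assms by simp
next
  case False
  have "Qc (-v) (-v) - Qc (-v) (-Tv) - max 0 (-1 - (-Tv)) \<ge> 0"
    using cert_L_pos[of "-v" "-Tv"] assms False by simp
  moreover have "Qc (-v) x = - Qc v (-x)" for x unfolding Qc_def alv_def cv_def by simp
  ultimately show ?thesis by simp
qed

lemma cert_L:
  assumes "\<bar>v\<bar> \<le> 87/100" "Tv \<le> v"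
  shows "Qc v v - Qc v Tv - max 0 (-1 - Tv) \<ge> 0"
proof (cases "v \<ge> 0")
  case True then show ?thesis using cert_L_pos assms by simp
next
  case False
  have "Qc (-v) (-Tv) - Qc (-v) (-v) - max 0 (-Tv - 1) \<ge> 0"
    using cert_R_pos[of "-v" "-Tv"] assms False by simp
  moreover have "Qc (-v) x = - Qc v (-x)" for x unfolding Qc_def alv_def cv_def by simp
  ultimately show ?thesis by (auto simp: max_def split: if_splits)
qed



lemma incr_lemma:
  fixes f f' :: "real \<Rightarrow> real"
  assumes "a \<le> b" "\<And>t. (f has_real_derivative f' t) (at t)" "\<And>t. a < t \<Longrightarrow> t < b \<Longrightarrow> f' t \<ge> 0"
  shows "f a \<le> f b"
proof (rule DERIV_nonneg_imp_increasing_open[OF assms(1)])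
  show "\<exists>y. (f has_real_derivative y) (at x) \<and> 0 \<le> y" if "a < x" "x < b" for x
    using assms that by blast
  show "continuous_on {a..b} f"
    using assms(2) by (meson DERIV_isCont continuous_at_imp_continuous_on)
qed

lemma tail_bound:
  fixes A G g gd q Qn :: "real \<Rightarrow> real" and nu lo hi :: real
  assumes dA: "\<And>t. (A has_real_derivative q t * g t) (at t)"
    and dG: "\<And>t. (G has_real_derivative g t) (at t)"
    and dg: "\<And>t. (g has_real_derivative gd t) (at t)"
    and dQ: "\<And>t. (Qn has_real_derivative q t) (at t)"
    and nu: "0 \<le> nu" "nu \<le> 1" "lo \<le> nu" "nu \<le> hi"
    and gd_up: "\<And>t. 0 < t \<Longrightarrow> t < nu \<Longrightarrow> gd t \<ge> 0"
    and gd_down: "\<And>t. nu < t \<Longrightarrow> t < 1 \<Longrightarrow> gd t \<le> 0"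
    and g01: "g 0 \<ge> 0" "g 1 \<ge> 0"
    and HR: "\<And>t. nu \<le> t \<Longrightarrow> t \<le> 1 \<Longrightarrow> Qn t - Qn nu - max 0 (t - hi) \<ge> 0"
    and HL: "\<And>t. 0 \<le> t \<Longrightarrow> t \<le> nu \<Longrightarrow> Qn nu - Qn t - max 0 (lo - t) \<ge> 0"
  shows "(if 0 < lo then G lo - G 0 else 0) + (if hi < 1 then G 1 - G hi else 0) \<le> A 1 - A 0"
proof -
  define P1 where "P1 t = A t - A nu - (Qn t - Qn nu) * g t" for t
  have dP1: "(P1 has_real_derivative (- (Qn t - Qn nu) * gd t)) (at t)" for t
    unfolding P1_def[abs_def]
    by (rule derivative_eq_intros dA dQ dg dG refl | simp add: algebra_simps)+
  define P2 where "P2 t = A t - A nu - (G t - G hi) - (Qn t - Qn nu - (t - hi)) * g t" for t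
  have dP2: "(P2 has_real_derivative (- (Qn t - Qn nu - (t - hi)) * gd t)) (at t)" for t
    unfolding P2_def[abs_def]
    by (rule derivative_eq_intros dA dQ dg dG refl | simp add: algebra_simps)+
  have R: "(if hi < 1 then G 1 - G hi else 0) \<le> A 1 - A nu"
  proof -
    have "P1 nu \<le> P1 (min hi 1)"
    proof (rule incr_lemma[OF _ dP1])
      show "nu \<le> min hi 1" using nu by simp
      fix t assume t: "nu < t" "t < min hi 1"
      have "Qn t - Qn nu \<ge> 0" using HR[of t] t by simp
      moreover have "gd t \<le> 0" using gd_down t by simp
      ultimately show "0 \<le> - (Qn t - Qn nu) * gd t" by (simp add: mult_nonpos_nonpos)
    qed
    moreover have "P1 nu = 0" by (simp add: P1_def)
    ultimately have P1m: "P1 (min hi 1) \<ge> 0" by simp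
    show ?thesis
    proof (cases "hi < 1")
      case False
      then have "P1 1 \<ge> 0" using P1m by simp
      moreover have "(Qn 1 - Qn nu) * g 1 \<ge> 0" using HR[of 1] nu g01 by simp
      ultimately show ?thesis using False by (simp add: P1_def)
    next
      case True
      have "P2 hi \<le> P2 1"
      proof (rule incr_lemma[OF _ dP2])
        show "hi \<le> 1" using True by simp
        fix t assume t: "hi < t" "t < 1"
        have "Qn t - Qn nu - (t - hi) \<ge> 0" using HR[of t] t nu by simp
        moreover have "gd t \<le> 0" using gd_down t nu by simp
        ultimately show "0 \<le> - (Qn t - Qn nu - (t - hi)) * gd t" using mult_nonneg_nonpos[of "Qn t - Qn nu - (t - hi)" "gd t"] by linarith
      qed
      moreover have "P2 hi = P1 hi" by (simp add: P1_def P2_def)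
      moreover have "(Qn 1 - Qn nu - (1 - hi)) * g 1 \<ge> 0" using HR[of 1] nu g01 True by simp
      ultimately show ?thesis using True P1m by (simp add: P2_def)
    qed
  qed
  define L1 where "L1 t = A nu - A t - (Qn nu - Qn t) * g t" for t
  have dL1: "(L1 has_real_derivative (- (Qn nu - Qn t) * gd t)) (at t)" for t
    unfolding L1_def[abs_def]
    by (rule derivative_eq_intros dA dQ dg dG refl | simp add: algebra_simps)+
  define L2 where "L2 t = A nu - A t - (G lo - G t) - (Qn nu - Qn t - (lo - t)) * g t" for t
  have dL2: "(L2 has_real_derivative (- (Qn nu - Qn t - (lo - t)) * gd t)) (at t)" for t
    unfolding L2_def[abs_def]
    by (rule derivative_eq_intros dA dQ dg dG refl | simp add: algebra_simps)+
  have L: "(if 0 < lo then G lo - G 0 else 0) \<le> A nu - A 0"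
  proof -
    have "- L1 (max lo 0) \<le> - L1 nu"
    proof (rule incr_lemma[of _ _ "\<lambda>t. - L1 t" "\<lambda>t. (Qn nu - Qn t) * gd t"])
      show "max lo 0 \<le> nu" using nu by simp
      show "((\<lambda>t. - L1 t) has_real_derivative (Qn nu - Qn t) * gd t) (at t)" for t
        using DERIV_minus[OF dL1[of t]] by (simp add: algebra_simps)
      fix t assume t: "max lo 0 < t" "t < nu"
      have "Qn nu - Qn t \<ge> 0" using HL[of t] t by simp
      moreover have "gd t \<ge> 0" using gd_up t by simp
      ultimately show "0 \<le> (Qn nu - Qn t) * gd t" by simp
    qed
    moreover have "L1 nu = 0" by (simp add: L1_def)
    ultimately have L1m: "L1 (max lo 0) \<ge> 0" by simp
    show ?thesis
    proof (cases "0 < lo")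
      case False
      then have "L1 0 \<ge> 0" using L1m by (simp add: max_def)
      moreover have "(Qn nu - Qn 0) * g 0 \<ge> 0" using HL[of 0] nu g01 by simp
      ultimately show ?thesis using False by (simp add: L1_def)
    next
      case True
      have "- L2 0 \<le> - L2 lo"
      proof (rule incr_lemma[of _ _ "\<lambda>t. - L2 t" "\<lambda>t. (Qn nu - Qn t - (lo - t)) * gd t"])
        show "0 \<le> lo" using True by simp
        show "((\<lambda>t. - L2 t) has_real_derivative (Qn nu - Qn t - (lo - t)) * gd t) (at t)" for t
          using DERIV_minus[OF dL2[of t]] by (simp add: algebra_simps)
        fix t assume t: "0 < t" "t < lo"
        have "Qn nu - Qn t - (lo - t) \<ge> 0" using HL[of t] t nu by simp
        moreover have "gd t \<ge> 0" using gd_up t nu by simp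
        ultimately show "0 \<le> (Qn nu - Qn t - (lo - t)) * gd t" by simp
      qed
      moreover have "L2 lo = L1 lo" by (simp add: L1_def L2_def)
      moreover have "(Qn nu - Qn 0 - (lo - 0)) * g 0 \<ge> 0" using HL[of 0] nu g01 True by simp
      ultimately show ?thesis using True L1m by (simp add: L2_def)
    qed
  qed
  from L R show ?thesis by simp
qed


definition Gb :: "nat \<Rightarrow> nat \<Rightarrow> real \<Rightarrow> real" where
  "Gb N m t = (\<Sum>j=m..N. real (N choose j) * t^j * (1-t)^(N-j))"
definition gb :: "nat \<Rightarrow> nat \<Rightarrow> real \<Rightarrow> real" where
  "gb N m t = real m * real (N choose m) * t^(m-1) * (1-t)^(N-m)"

lemma binom_id: "(N - m) * (N choose m) = Suc m * (N choose Suc m)"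
  using binomial_absorb_comp[of N m] times_binomial_minus1_eq[of "Suc m" N] by simp

lemma Gb_deriv_aux:
  "\<forall>m. 1 \<le> m \<longrightarrow> m \<le> Suc N \<longrightarrow> Suc N - m = d \<longrightarrow> (Gb N m has_real_derivative gb N m t) (at t)"
proof (induction d)
  case 0
  show ?case
  proof (intro allI impI)
    fix m assume m: "1 \<le> m" "m \<le> Suc N" "Suc N - m = 0"
    then have "m = Suc N" by simp
    then have "Gb N m = (\<lambda>_. 0)" "gb N m t = 0" by (auto simp: Gb_def gb_def fun_eq_iff)
    then show "(Gb N m has_real_derivative gb N m t) (at t)" by simp
  qed
next
  case (Suc d)
  show ?case
  proof (intro allI impI)
    fix m assume m: "1 \<le> m" "m \<le> Suc N" "Suc N - m = Suc d"
    then have mN: "m \<le> N" by simp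
    have IH: "(Gb N (Suc m) has_real_derivative gb N (Suc m) t) (at t)"
      using Suc.IH m by simp
    have eq: "Gb N m = (\<lambda>t. real (N choose m) * t^m * (1-t)^(N-m) + Gb N (Suc m) t)"
      using mN by (simp add: Gb_def fun_eq_iff sum.atLeast_Suc_atMost)
    have bi: "real (N - m) * real (N choose m) = real (Suc m) * real (N choose Suc m)"
      using binom_id[of N m] by (metis of_nat_mult)
    have "((\<lambda>t. real (N choose m) * t^m * (1-t)^(N-m) + Gb N (Suc m) t) has_real_derivative
        real (N choose m) * (real m * t^(m-1) * (1-t)^(N-m) - real (N-m) * t^m * (1-t)^(N-m-1))
          + gb N (Suc m) t) (at t)"
      by (rule derivative_eq_intros IH refl | simp add: algebra_simps)+
    moreover have "real (N choose m) * (real m * t^(m-1) * (1-t)^(N-m) - real (N-m) * t^m * (1-t)^(N-m-1))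
          + gb N (Suc m) t = gb N m t"
    proof -
      have "real (N choose m) * (real (N-m) * t^m * (1-t)^(N-m-1)) = (real (N - m) * real (N choose m)) * t^m * (1-t)^(N-m-1)"
        by (simp add: algebra_simps)
      also have "\<dots> = gb N (Suc m) t" unfolding bi gb_def by (simp add: algebra_simps)
      finally show ?thesis unfolding gb_def by (simp add: algebra_simps)
    qed
    ultimately show "(Gb N m has_real_derivative gb N m t) (at t)" unfolding eq by simp
  qed
qed

lemma Gb_deriv: "1 \<le> m \<Longrightarrow> m \<le> Suc N \<Longrightarrow> (Gb N m has_real_derivative gb N m t) (at t)"
  using Gb_deriv_aux by blast

lemma Gb_0: "1 \<le> m \<Longrightarrow> Gb N m 0 = 0"
  unfolding Gb_def by (intro sum.neutral) auto

lemma Gb_1: assumes "m \<le> N" shows "Gb N m 1 = 1"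
proof -
  have "Gb N m 1 = (\<Sum>j\<in>{m..N}. if j = N then 1 else 0)"
    unfolding Gb_def by (intro sum.cong) auto
  also have "\<dots> = 1" using assms by simp
  finally show ?thesis .
qed

lemma gb_nonneg: "0 \<le> t \<Longrightarrow> t \<le> 1 \<Longrightarrow> gb N m t \<ge> 0"
  unfolding gb_def by simp

lemma gb_shift: assumes "1 \<le> m" shows "t * gb N m t = real m / real (Suc N) * gb (Suc N) (Suc m) t"
proof -
  have bi: "real (Suc m) * real (Suc N choose Suc m) = real (Suc N) * real (N choose m)"
    using Suc_times_binomial[of m N] by (metis of_nat_mult)
  have tp: "t * t^(m-1) = t^m" using assms by (cases m) auto
  have "real m / real (Suc N) * gb (Suc N) (Suc m) t
      = real m / real (Suc N) * (real (Suc m) * real (Suc N choose Suc m)) * t^m * (1-t)^(N-m)"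
    unfolding gb_def by simp
  also have "\<dots> = real m * real (N choose m) * t^m * (1-t)^(N-m)" unfolding bi by simp
  also have "\<dots> = t * gb N m t" unfolding gb_def tp[symmetric] by (simp add: algebra_simps)
  finally show ?thesis by simp
qed

definition gdb :: "nat \<Rightarrow> nat \<Rightarrow> real \<Rightarrow> real" where
  "gdb N m t = real m * real (N choose m) *
     (real (m-1) * t^(m-1-1) * (1-t)^(N-m) - real (N-m) * t^(m-1) * (1-t)^(N-m-1))"

lemma gb_deriv: "(gb N m has_real_derivative gdb N m t) (at t)"
  unfolding gb_def[abs_def] gdb_def
  by (rule derivative_eq_intros refl | simp add: algebra_simps)+

definition modeb :: "nat \<Rightarrow> nat \<Rightarrow> real" where
  "modeb N m = (if N = 1 then 1/2 else real (m-1) / real (N-1))"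

lemma gdb_sign:
  assumes m: "1 \<le> m" "m \<le> N" and t: "0 < t" "t < 1"
  shows "t < modeb N m \<Longrightarrow> gdb N m t \<ge> 0" and "modeb N m < t \<Longrightarrow> gdb N m t \<le> 0"
proof -
  have C: "real m * real (N choose m) \<ge> 0" by simp
  have main: "gdb N m t = real m * real (N choose m) * (t^(m-1-1) * (1-t)^(N-m-1)) * (real (m-1) - real (N-1) * t)
        \<or> (m = 1 \<and> gdb N m t = - real m * real (N choose m) * real (N-m) * (1-t)^(N-m-1))
        \<or> (m = N \<and> gdb N m t = real m * real (N choose m) * real (m-1) * t^(m-1-1))"
  proof (cases "m = 1")
    case True then show ?thesis by (simp add: gdb_def)
  next
    case m1: False
    show ?thesis
    proof (cases "m = N")
      case True then show ?thesis by (simp add: gdb_def)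
    next
      case False
      have e1: "t^(m-1) = t * t^(m-1-1)" using m1 m by (cases "m-1") auto
      have e2: "(1-t)^(N-m) = (1-t) * (1-t)^(N-m-1)" using False m by (cases "N-m") auto
      have e3: "real (N-m) = real (N-1) - real (m-1)" using m False m1 by simp
      show ?thesis unfolding gdb_def e1 e2 e3 by (simp add: algebra_simps)
    qed
  qed
  have pos: "t^(m-1-1) * (1-t)^(N-m-1) \<ge> 0" using t by simp
  show "t < modeb N m \<Longrightarrow> gdb N m t \<ge> 0"
  proof -
    assume lt: "t < modeb N m"
    show ?thesis
    proof (cases "N = 1")
      case True then have "m = 1" using m by simp
      with True show ?thesis by (simp add: gdb_def)
    next
      case False
      then have N1: "real (N-1) > 0" using m by simp
      from lt False have "t < real (m-1) / real (N-1)" by (simp add: modeb_def)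
      then have d: "real (m-1) - real (N-1) * t > 0" using N1 by (simp add: field_simps)
      then have "m \<noteq> 1" using t N1 by (auto simp: mult_less_0_iff)
      from main show ?thesis
        using C pos d t \<open>m \<noteq> 1\<close> by (auto intro!: mult_nonneg_nonneg)
    qed
  qed
  show "modeb N m < t \<Longrightarrow> gdb N m t \<le> 0"
  proof -
    assume lt: "modeb N m < t"
    show ?thesis
    proof (cases "N = 1")
      case True then have "m = 1" using m by simp
      with True show ?thesis by (simp add: gdb_def)
    next
      case False
      then have N1: "real (N-1) > 0" using m by simp
      from lt False have "real (m-1) / real (N-1) < t" by (simp add: modeb_def)
      then have d: "real (m-1) - real (N-1) * t < 0" using N1 by (simp add: field_simps)
      then have "m \<noteq> N" using t N1 mult_strict_right_mono[of t 1 "real (N-1)"] by auto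
      from main show ?thesis
      proof (elim disjE conjE)
        assume e: "gdb N m t = real m * real (N choose m) * (t^(m-1-1) * (1-t)^(N-m-1)) * (real (m-1) - real (N-1) * t)"
        have "real m * real (N choose m) * (t^(m-1-1) * (1-t)^(N-m-1)) \<ge> 0" using C pos by simp
        then show ?thesis unfolding e using d mult_nonneg_nonpos[of "real m * real (N choose m) * (t^(m-1-1) * (1-t)^(N-m-1))" "real (m-1) - real (N-1) * t"] by linarith
      next
        assume "m = 1" "gdb N m t = - real m * real (N choose m) * real (N-m) * (1-t)^(N-m-1)"
        then show ?thesis using t by simp
      next
        assume "m = N" then show ?thesis using \<open>m \<noteq> N\<close> by simp
      qed
    qed
  qed
qed

lemma aux_V:
  fixes y d1 d2 :: real
  assumes "d1 \<noteq> 0" "d2 \<noteq> 0" "d2 = d1 + 1"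
  shows "y/d1*((y+1)/d2) - 2*(y/d1)*(y/d1) + (y/d1)^2 = (y/d1)*(1 - y/d1)/d2"
proof -
  have "y/d1*((y+1)/d2) - 2*(y/d1)*(y/d1) + (y/d1)^2 = (y*(y+1)*d1 - y*y*d2) / (d1*d1*d2)"
    using assms(1,2) by (simp add: field_simps power2_eq_square)
  also have "\<dots> = (y*(d1 - y)) / (d1*d1*d2)" using assms(3) by (simp add: algebra_simps)
  also have "\<dots> = (y/d1)*(1 - y/d1)/d2" using assms(1,2) by (simp add: field_simps)
  finally show ?thesis .
qed

lemma analytic_main:
  fixes N m :: nat and \<gamma> \<epsilon> :: real
  assumes m: "1 \<le> m" "m \<le> N" and gam: "\<gamma> = real m / real (Suc N)" and eps: "\<epsilon> > 0"
    and vb: "((modeb N m - \<gamma>) / \<epsilon>)^2 \<le> 3/4"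
    and tau: "\<gamma> * (1 - \<gamma>) / real (N + 2) \<le> 3/8 * \<epsilon>^2"
  shows "(if 0 < \<gamma> - \<epsilon> then Gb N m (\<gamma> - \<epsilon>) else 0) + (if \<gamma> + \<epsilon> < 1 then 1 - Gb N m (\<gamma> + \<epsilon>) else 0)
     \<le> 4/9 * (\<gamma> * (1 - \<gamma>) / real (N + 2)) / \<epsilon>^2"
proof -
  define v where "v = (modeb N m - \<gamma>) / \<epsilon>"
  have v_abs: "\<bar>v\<bar> \<le> 87/100"
  proof -
    have "v^2 \<le> 3/4" using vb unfolding v_def[symmetric] by simp
    moreover have "(3/4::real) \<le> (87/100)^2" by (simp add: power2_eq_square)
    ultimately have "v^2 \<le> (87/100)^2" by linarith
    then show ?thesis using abs_le_square_iff[of v "87/100"] by simp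
  qed
  define al where "al = alv v"
  define c where "c = cv v"
  define q where "q t = al * ((t - \<gamma>) / \<epsilon>)^2 + c" for t
  define Qn where "Qn t = \<epsilon> * Qc v ((t - \<gamma>) / \<epsilon>)" for t
  define c1 where "c1 = real m / real (Suc N)"
  define c2 where "c2 = real m / real (Suc N) * (real (Suc m) / real (Suc (Suc N)))"
  define A where "A t = al / \<epsilon>^2 * (c2 * Gb (Suc (Suc N)) (Suc (Suc m)) t - 2 * \<gamma> * c1 * Gb (Suc N) (Suc m) t
      + \<gamma>^2 * Gb N m t) + c * Gb N m t" for t
  define nu where "nu = modeb N m"
  have X: "c1 * gb (Suc N) (Suc m) t = t * gb N m t" for t
    using gb_shift[OF m(1), of t N] by (simp add: c1_def)
  have Y: "c2 * gb (Suc (Suc N)) (Suc (Suc m)) t = t^2 * gb N m t" for t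
  proof -
    have "c2 * gb (Suc (Suc N)) (Suc (Suc m)) t = c1 * (real (Suc m) / real (Suc (Suc N)) * gb (Suc (Suc N)) (Suc (Suc m)) t)"
      by (simp add: c1_def c2_def)
    also have "\<dots> = c1 * (t * gb (Suc N) (Suc m) t)" using gb_shift[of "Suc m" t "Suc N"] by simp
    also have "\<dots> = t * (t * gb N m t)" using X[of t] by (simp add: algebra_simps)
    finally show ?thesis by (simp add: power2_eq_square)
  qed
  have dA: "(A has_real_derivative q t * gb N m t) (at t)" for t
  proof -
    have "(A has_real_derivative al / \<epsilon>^2 * (c2 * gb (Suc (Suc N)) (Suc (Suc m)) t - 2 * \<gamma> * c1 * gb (Suc N) (Suc m) t
      + \<gamma>^2 * gb N m t) + c * gb N m t) (at t)"
      unfolding A_def[abs_def]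
      by (rule derivative_eq_intros Gb_deriv refl | use m in simp)+
    moreover have "al / \<epsilon>^2 * (c2 * gb (Suc (Suc N)) (Suc (Suc m)) t - 2 * \<gamma> * c1 * gb (Suc N) (Suc m) t
      + \<gamma>^2 * gb N m t) + c * gb N m t = q t * gb N m t"
    proof -
      have "c2 * gb (Suc (Suc N)) (Suc (Suc m)) t - 2 * \<gamma> * c1 * gb (Suc N) (Suc m) t + \<gamma>^2 * gb N m t
          = (t - \<gamma>)^2 * gb N m t"
        using X[of t] Y by (simp add: algebra_simps power2_eq_square)
      then show ?thesis unfolding q_def using eps by (simp add: power_divide algebra_simps)
    qed
    ultimately show ?thesis by simp
  qed
  have dG: "(Gb N m has_real_derivative gb N m t) (at t)" for t using Gb_deriv m by simp
  have dQ: "(Qn has_real_derivative q t) (at t)" for t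
  proof -
    have dQc: "(Qc v has_real_derivative alv v * x^2 + cv v) (at x)" for x
      unfolding Qc_def[abs_def] by (rule derivative_eq_intros refl | simp)+
    have dlin0: "((\<lambda>t. (t - \<gamma>) / \<epsilon>) has_real_derivative (1 - 0) / \<epsilon>) (at t)"
      by (intro DERIV_cdivide DERIV_diff DERIV_ident DERIV_const)
    then have dlin: "((\<lambda>t. (t - \<gamma>) / \<epsilon>) has_real_derivative 1 / \<epsilon>) (at t)" by simp
    have "(Qn has_real_derivative \<epsilon> * ((alv v * ((t - \<gamma>) / \<epsilon>)^2 + cv v) * (1 / \<epsilon>))) (at t)"
      unfolding Qn_def[abs_def] by (intro DERIV_cmult DERIV_chain2[OF dQc dlin])
    moreover have "\<epsilon> * ((alv v * ((t - \<gamma>) / \<epsilon>)^2 + cv v) * (1 / \<epsilon>)) = q t"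
      using eps unfolding q_def al_def c_def by simp
    ultimately show ?thesis by simp
  qed
  have nu01: "0 \<le> nu" "nu \<le> 1"
    using m by (auto simp: nu_def modeb_def divide_le_eq_1)
  have nu_eq: "nu = \<gamma> + \<epsilon> * v" using eps by (simp add: v_def nu_def)
  have lohi: "\<gamma> - \<epsilon> \<le> nu" "nu \<le> \<gamma> + \<epsilon>"
  proof -
    have "\<bar>\<epsilon> * v\<bar> \<le> \<epsilon>" using v_abs eps by (simp add: abs_mult mult_left_le)
    then show "\<gamma> - \<epsilon> \<le> nu" "nu \<le> \<gamma> + \<epsilon>" unfolding nu_eq by auto
  qed
  have vnu: "(nu - \<gamma>) / \<epsilon> = v" by (simp add: v_def nu_def)
  have maxe: "max 0 (\<epsilon> * x) = \<epsilon> * max 0 x" for x using eps by (auto simp: max_def zero_le_mult_iff)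
  have HR: "Qn t - Qn nu - max 0 (t - (\<gamma> + \<epsilon>)) \<ge> 0" if "nu \<le> t" for t
  proof -
    have Tv: "(t - \<gamma>) / \<epsilon> \<ge> v" using that eps vnu by (simp add: divide_right_mono[of "nu - \<gamma>" "t - \<gamma>" \<epsilon>] flip: vnu)
    have e1: "t - (\<gamma> + \<epsilon>) = \<epsilon> * ((t - \<gamma>) / \<epsilon> - 1)" using eps by (simp add: field_simps)
    have e2: "max 0 (t - (\<gamma> + \<epsilon>)) = \<epsilon> * max 0 ((t - \<gamma>) / \<epsilon> - 1)" unfolding e1 maxe ..
    have "Qn t - Qn nu - max 0 (t - (\<gamma> + \<epsilon>)) = \<epsilon> * (Qc v ((t - \<gamma>) / \<epsilon>) - Qc v v - max 0 ((t - \<gamma>) / \<epsilon> - 1))"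
      unfolding Qn_def vnu e2 by (simp add: algebra_simps)
    moreover have "Qc v ((t - \<gamma>) / \<epsilon>) - Qc v v - max 0 ((t - \<gamma>) / \<epsilon> - 1) \<ge> 0" using cert_R[OF v_abs Tv] .
    ultimately show ?thesis using eps by simp
  qed
  have HL: "Qn nu - Qn t - max 0 ((\<gamma> - \<epsilon>) - t) \<ge> 0" if "t \<le> nu" for t
  proof -
    have Tv: "(t - \<gamma>) / \<epsilon> \<le> v" using that eps vnu by (simp add: divide_right_mono[of "t - \<gamma>" "nu - \<gamma>" \<epsilon>] flip: vnu)
    have e1: "(\<gamma> - \<epsilon>) - t = \<epsilon> * (-1 - (t - \<gamma>) / \<epsilon>)" using eps by (simp add: field_simps)
    have e2: "max 0 ((\<gamma> - \<epsilon>) - t) = \<epsilon> * max 0 (-1 - (t - \<gamma>) / \<epsilon>)" unfolding e1 maxe ..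
    have "Qn nu - Qn t - max 0 ((\<gamma> - \<epsilon>) - t) = \<epsilon> * (Qc v v - Qc v ((t - \<gamma>) / \<epsilon>) - max 0 (-1 - (t - \<gamma>) / \<epsilon>))"
      unfolding Qn_def vnu e2 by (simp add: algebra_simps)
    moreover have "Qc v v - Qc v ((t - \<gamma>) / \<epsilon>) - max 0 (-1 - (t - \<gamma>) / \<epsilon>) \<ge> 0" using cert_L[OF v_abs Tv] .
    ultimately show ?thesis using eps by simp
  qed
  have main: "(if 0 < \<gamma> - \<epsilon> then Gb N m (\<gamma> - \<epsilon>) - Gb N m 0 else 0) + (if \<gamma> + \<epsilon> < 1 then Gb N m 1 - Gb N m (\<gamma> + \<epsilon>) else 0) \<le> A 1 - A 0"
  proof (rule tail_bound[OF dA dG gb_deriv dQ nu01 lohi])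
    show "gdb N m t \<ge> 0" if "0 < t" "t < nu" for t
      using gdb_sign(1)[OF m, of t] that nu01 by (simp add: nu_def)
    show "gdb N m t \<le> 0" if "nu < t" "t < 1" for t
      using gdb_sign(2)[OF m, of t] that nu01 by (simp add: nu_def)
    show "gb N m 0 \<ge> 0" "gb N m 1 \<ge> 0" by (auto intro: gb_nonneg)
    show "Qn t - Qn nu - max 0 (t - (\<gamma> + \<epsilon>)) \<ge> 0" if "nu \<le> t" "t \<le> 1" for t using HR that by simp
    show "Qn nu - Qn t - max 0 ((\<gamma> - \<epsilon>) - t) \<ge> 0" if "0 \<le> t" "t \<le> nu" for t using HL that by simp
  qed
  have A0: "A 0 = 0" using m by (simp add: A_def Gb_0)
  have V: "c2 - 2 * \<gamma> * c1 + \<gamma>^2 = \<gamma> * (1 - \<gamma>) / real (N + 2)"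
  proof -
    define x where "x = real N"
    define y where "y = real m"
    have x: "x \<ge> 0" by (simp add: x_def)
    have h1: "x + 1 \<noteq> 0" "x + 2 \<noteq> 0" using x by auto
    have "c2 - 2 * \<gamma> * c1 + \<gamma>^2 = y / (x+1) * ((y+1) / (x+2)) - 2 * (y/(x+1)) * (y/(x+1)) + (y/(x+1))^2"
      unfolding c1_def c2_def gam x_def y_def by (simp add: add.commute)
    also have "\<dots> = (y/(x+1)) * (1 - y/(x+1)) / (x+2)"
      using aux_V[OF h1] by simp
    also have "\<dots> = \<gamma> * (1 - \<gamma>) / real (N + 2)" unfolding gam x_def y_def by (simp add: add.commute)
    finally show ?thesis .
  qed
  have A1: "A 1 = al * (\<gamma> * (1 - \<gamma>) / real (N + 2)) / \<epsilon>^2 + c"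
    using m V[symmetric] by (simp add: A_def Gb_1)
  have fin: "al * (\<gamma> * (1 - \<gamma>) / real (N + 2)) / \<epsilon>^2 + c \<le> 4/9 * (\<gamma> * (1 - \<gamma>) / real (N + 2)) / \<epsilon>^2"
  proof -
    define tt where "tt = (\<gamma> * (1 - \<gamma>) / real (N + 2)) / \<epsilon>^2"
    have "tt \<le> (3/8 * \<epsilon>^2) / \<epsilon>^2" unfolding tt_def using tau eps by (intro divide_right_mono) auto
    then have tt: "tt \<le> 3/8" using eps by simp
    have "al * tt + c - 4/9 * tt = 29/100 * v^2 * (tt - 3/8)"
      unfolding al_def c_def alv_def cv_def by (simp add: algebra_simps)
    also have "\<dots> \<le> 0" using tt by (simp add: mult_nonneg_nonpos)
    finally have "al * tt + c \<le> 4/9 * tt" by simp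
    moreover have "al * tt = al * (\<gamma> * (1 - \<gamma>) / real (N + 2)) / \<epsilon>^2" "4/9 * tt = 4/9 * (\<gamma> * (1 - \<gamma>) / real (N + 2)) / \<epsilon>^2"
      unfolding tt_def by simp_all
    ultimately show ?thesis by linarith
  qed
  have G0: "Gb N m 0 = 0" using Gb_0 m by simp
  have G1: "Gb N m 1 = 1" using Gb_1 m by simp
  from main have "(if 0 < \<gamma> - \<epsilon> then Gb N m (\<gamma> - \<epsilon>) else 0) + (if \<gamma> + \<epsilon> < 1 then 1 - Gb N m (\<gamma> + \<epsilon>) else 0) \<le> A 1 - A 0"
    unfolding G0 G1 by (simp split: if_splits)
  then show ?thesis using A0 A1 fin by linarith
qed



lemma poly_key:
  fixes x y :: real
  assumes "y \<ge> 1" "x + 1 - y \<ge> 1" "x \<ge> 2"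
  shows "(2*y - x - 1)^2 * (x + 2) \<le> 2 * y * (x + 1 - y) * (x - 1)^2"
proof -
  define p where "p = y"
  define r where "r = x + 1 - y"
  have p: "p \<ge> 1" and r: "r \<ge> 1" and pr: "p + r \<ge> 3" using assms by (auto simp: p_def r_def)
  have e1: "2*y - x - 1 = p - r" "x + 2 = p + r + 1" "x - 1 = p + r - 2" "x + 1 - y = r"
    by (auto simp: p_def r_def)
  have a: "(p - r)^2 \<le> (p + r - 2)^2"
  proof -
    have "\<bar>p - r\<bar> \<le> \<bar>p + r - 2\<bar>" using p r by auto
    then show ?thesis using abs_le_square_iff by blast
  qed
  have b: "p + r + 1 \<le> 2 * p * r"
  proof -
    have "2 * p * r - (p + r + 1) = 2 * (p - 1) * (r - 1) + (p + r - 3)" by (simp add: algebra_simps)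
    moreover have "2 * (p - 1) * (r - 1) \<ge> 0" using p r by simp
    ultimately show ?thesis using pr by linarith
  qed
  have "(p - r)^2 * (p + r + 1) \<le> (p + r - 2)^2 * (2 * p * r)"
    using a b pr by (intro mult_mono) auto
  moreover have "(2*y - x - 1)^2 * (x + 2) = (p - r)^2 * (p + r + 1)" by (simp only: e1)
  moreover have "2 * y * (x + 1 - y) * (x - 1)^2 = (p + r - 2)^2 * (2 * p * r)"
    by (simp add: p_def r_def power2_eq_square algebra_simps)
  ultimately show ?thesis by linarith
qed

lemma params:
  fixes \<gamma> \<epsilon> \<rho> :: real and n1 n2 N :: nat and k :: int
  assumes g: "0 < \<gamma>" "\<gamma> < 1" "0 < n1" "0 < n2" "\<gamma> = real n1 / real n2"
    and e: "0 < \<epsilon>" "0 < \<rho>"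
    and c1: "4 * \<gamma> * (1 - \<gamma>) > 9 * \<rho> * \<epsilon>\<^sup>2"
    and c2: "6 * \<rho> \<le> 1"
    and k_def: "k = \<lceil>(1 / real n2) * ((4 * \<gamma> * (1 - \<gamma>)) / (9 * \<rho> * \<epsilon>\<^sup>2) - 1)\<rceil>"
    and N_def: "int N = k * int n2 - 1"
  defines "m \<equiv> nat \<lfloor>real N * \<gamma>\<rfloor> + 1"
  shows "1 \<le> m" "m \<le> N" "\<gamma> = real m / real (Suc N)"
    "\<gamma> * (1 - \<gamma>) / real (N + 2) \<le> 3/8 * \<epsilon>^2"
    "((modeb N m - \<gamma>) / \<epsilon>)^2 \<le> 3/4"
    "4/9 * (\<gamma> * (1 - \<gamma>) / real (N + 2)) / \<epsilon>^2 \<le> \<rho>"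
proof -
  have n12: "n1 < n2" using g by (simp add: divide_less_eq_1)
  define B where "B = (4 * \<gamma> * (1 - \<gamma>)) / (9 * \<rho> * \<epsilon>\<^sup>2)"
  have den: "9 * \<rho> * \<epsilon>\<^sup>2 > 0" using e by simp
  have B1: "B > 1" using c1 den by (simp add: B_def)
  have kge: "real_of_int k \<ge> (B - 1) / real n2" unfolding k_def B_def by simp
  have "(B - 1) / real n2 > 0" using B1 g by simp
  then have k1: "k \<ge> 1" using kge by linarith
  have N2: "real N + 2 \<ge> B"
  proof -
    have "real_of_int k * real n2 \<ge> B - 1" using kge g by (simp add: field_simps)
    moreover have "real N = real_of_int k * real n2 - 1" using N_def by (metis of_int_diff of_int_mult of_int_of_nat_eq of_int_1)
    ultimately show ?thesis by simp
  qed
  have key: "4 * \<gamma> * (1 - \<gamma>) \<le> 9 * \<rho> * \<epsilon>\<^sup>2 * (real N + 2)"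
    using N2 den unfolding B_def by (simp add: field_simps)
  have Npos: "real N + 2 > 0" by simp
  show V: "\<gamma> * (1 - \<gamma>) / real (N + 2) \<le> 3/8 * \<epsilon>^2"
  proof -
    have "\<gamma> * (1 - \<gamma>) \<le> 9/4 * \<rho> * \<epsilon>^2 * (real N + 2)" using key by simp
    also have "\<dots> \<le> 9/4 * (1/6) * \<epsilon>^2 * (real N + 2)" using c2 e by (intro mult_right_mono) auto
    finally show ?thesis using Npos by (simp add: field_simps)
  qed
  show "4/9 * (\<gamma> * (1 - \<gamma>) / real (N + 2)) / \<epsilon>^2 \<le> \<rho>"
  proof -
    have "4 * \<gamma> * (1 - \<gamma>) / (real N + 2) \<le> 9 * \<rho> * \<epsilon>\<^sup>2" using key Npos by (simp add: divide_le_eq)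
    then have "4 * \<gamma> * (1 - \<gamma>) / (real N + 2) / (9 * \<epsilon>\<^sup>2) \<le> \<rho>" using e by (simp add: divide_le_eq mult.commute mult.left_commute)
    moreover have "4/9 * (\<gamma> * (1 - \<gamma>) / real (N + 2)) / \<epsilon>^2 = 4 * \<gamma> * (1 - \<gamma>) / (real N + 2) / (9 * \<epsilon>\<^sup>2)"
      by (simp add: field_simps)
    ultimately show ?thesis by simp
  qed
  define K where "K = nat k"
  have K: "real_of_int k = real K" "K \<ge> 1" using k1 by (auto simp: K_def)
  have NK: "real N = real K * real n2 - 1" using N_def K by (metis of_int_diff of_int_mult of_int_of_nat_eq of_int_1)
  have "real N * \<gamma> = real (K * n1) - real n1 / real n2" using g(4) unfolding NK g(5) by (simp add: field_simps)
  moreover have "0 < real n1 / real n2" "real n1 / real n2 < 1" using g by auto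
  ultimately have fl: "\<lfloor>real N * \<gamma>\<rfloor> = int (K * n1) - 1"
    by (intro floor_unique) auto
  have Kn1: "K * n1 \<ge> 1" using K g by simp
  have mK: "m = K * n1"
  proof -
    obtain j where j: "K * n1 = Suc j" using Kn1 by (cases "K * n1") auto
    show ?thesis unfolding m_def fl j by simp
  qed
  show "1 \<le> m" using mK Kn1 by simp
  have NK1: "N + 1 = K * n2"
  proof -
    have "real (N + 1) = real (K * n2)" using NK by simp
    then show ?thesis by (simp only: of_nat_eq_iff)
  qed
  have lt: "K * n1 < K * n2" using K n12 by simp
  show mN: "m \<le> N" using lt mK NK1 by linarith
  show gm: "\<gamma> = real m / real (Suc N)"
  proof -
    have "real m / real (Suc N) = (real K * real n1) / (real K * real n2)"
      using mK NK1 by (simp del: of_nat_mult add: of_nat_mult[symmetric])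
    also have "\<dots> = \<gamma>" using K g by simp
    finally show ?thesis by simp
  qed
  have N1: "N \<ge> 1" using NK1 K g n12 by (metis One_nat_def Suc_eq_plus1 Suc_le_eq mK mN not_less_eq_eq \<open>1 \<le> m\<close> order_trans)
  show "((modeb N m - \<gamma>) / \<epsilon>)^2 \<le> 3/4"
  proof (cases "N = 1")
    case True
    then have "m = 1" using mN \<open>1 \<le> m\<close> by simp
    then have "\<gamma> = 1/2" using gm True by simp
    then have "modeb N m - \<gamma> = 0" using True by (simp add: modeb_def)
    then show ?thesis by simp
  next
    case False
    then have N2: "N \<ge> 2" using N1 by simp
    define x where "x = real N"
    define y where "y = real m"
    have x2: "x \<ge> 2" using N2 by (simp add: x_def)
    have y1: "y \<ge> 1" "x + 1 - y \<ge> 1" using \<open>1 \<le> m\<close> mN by (auto simp: x_def y_def)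
    have md: "modeb N m = (y - 1) / (x - 1)" using False \<open>1 \<le> m\<close> N1
      by (simp add: modeb_def x_def y_def of_nat_diff)
    have gxy: "\<gamma> = y / (x + 1)" using gm by (simp add: x_def y_def)
    have h1: "x - 1 \<noteq> 0" "x + 1 \<noteq> 0" "x + 2 \<noteq> 0" using x2 by auto
    have diff: "modeb N m - \<gamma> = (2*y - x - 1) / ((x - 1) * (x + 1))"
      unfolding md gxy using h1 by (simp add: field_simps)
    have gg: "\<gamma> * (1 - \<gamma>) / real (N + 2) = y * (x + 1 - y) / ((x + 1)^2 * (x + 2))"
      unfolding gxy using h1 by (simp add: field_simps power2_eq_square x_def)
    have "(modeb N m - \<gamma>)^2 = (2*y - x - 1)^2 / ((x - 1)^2 * (x + 1)^2)"
      unfolding diff by (simp add: power_divide power_mult_distrib)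
    also have "\<dots> \<le> 2 * y * (x + 1 - y) * (x - 1)^2 / ((x + 2) * ((x - 1)^2 * (x + 1)^2))"
    proof -
      have pk: "(x + 2) * (2*y - x - 1)^2 \<le> 2 * y * (x + 1 - y) * (x - 1)^2" using poly_key[OF y1 x2] by (simp add: mult.commute)
      have pos: "(x + 2) * ((x - 1)^2 * (x + 1)^2) > 0" using x2 by simp
      have "(2*y - x - 1)^2 / ((x - 1)^2 * (x + 1)^2) = (x + 2) * (2*y - x - 1)^2 / ((x + 2) * ((x - 1)^2 * (x + 1)^2))"
        by (rule mult_divide_mult_cancel_left[OF h1(3), symmetric])
      also have "\<dots> \<le> 2 * y * (x + 1 - y) * (x - 1)^2 / ((x + 2) * ((x - 1)^2 * (x + 1)^2))"
        using pk pos by (intro divide_right_mono) auto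
      finally show ?thesis .
    qed
    also have "\<dots> = 2 * (y * (x + 1 - y)) / ((x + 1)^2 * (x + 2))"
    proof -
      have d1: "(x + 2) * ((x - 1)^2 * (x + 1)^2) \<noteq> 0" and d2: "(x + 1)^2 * (x + 2) \<noteq> 0" using h1 by auto
      show ?thesis unfolding frac_eq_eq[OF d1 d2] by algebra
    qed
    also have "\<dots> = 2 * (y * (x + 1 - y) / ((x + 1)^2 * (x + 2)))" by simp
    also have "\<dots> = 2 * (\<gamma> * (1 - \<gamma>) / real (N + 2))" unfolding gg ..
    also have "\<dots> \<le> 2 * (3/8 * \<epsilon>^2)" using V by linarith
    finally have "(modeb N m - \<gamma>)^2 \<le> 3/4 * \<epsilon>^2" by simp
    then show ?thesis using e by (simp add: power_divide field_simps)
  qed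
qed


lemma order_stat_iff:
  fixes x :: "nat \<Rightarrow> real" and P :: "real \<Rightarrow> bool"
  assumes down: "\<And>a b. a \<le> b \<Longrightarrow> P b \<Longrightarrow> P a" and m: "1 \<le> m" "m \<le> N"
  shows "P (order_stat x N m) \<longleftrightarrow> m \<le> card {i\<in>{1..N}. P (x i)}"
proof -
  define xs where "xs = map x [1..<N+1]"
  define L where "L = sort xs"
  have lenL: "length L = N" by (simp add: L_def xs_def)
  have sL: "sorted L" by (simp add: L_def)
  have "length (filter P L) = length (filter P xs)"
  proof -
    have "mset (filter P L) = mset (filter P xs)" by (simp add: L_def)
    then show ?thesis by (metis size_mset)
  qed
  also have "length (filter P xs) = card {i\<in>{1..N}. P (x i)}"
  proof -
    have "length (filter P xs) = length (filter (P \<circ> x) [1..<N+1])" unfolding xs_def filter_map length_map ..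
    also have "\<dots> = card (set (filter (P \<circ> x) [1..<N+1]))" by (metis distinct_card distinct_filter distinct_upt)
    also have "set (filter (P \<circ> x) [1..<N+1]) = {i\<in>{1..N}. P (x i)}" by auto
    finally show ?thesis .
  qed
  finally have cnt: "length (filter P L) = card {i\<in>{1..N}. P (x i)}" .
  define K where "K = {j. j < length L \<and> P (L ! j)}"
  have cK: "length (filter P L) = card K" unfolding K_def by (rule length_filter_conv_card)
  have downK: "j' \<in> K" if "j \<in> K" "j' \<le> j" for j j'
  proof -
    have "L ! j' \<le> L ! j" using sL that by (auto simp: K_def intro: sorted_nth_mono)
    then show ?thesis using that down by (auto simp: K_def)
  qed
  have finK: "finite K" unfolding K_def by simp
  have os: "order_stat x N m = L ! (m - 1)" by (simp add: order_stat_def L_def xs_def)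
  have "P (L ! (m - 1)) \<longleftrightarrow> m \<le> card K"
  proof
    assume "P (L ! (m - 1))"
    then have "m - 1 \<in> K" using m lenL by (simp add: K_def)
    then have "{0..m-1} \<subseteq> K" using downK by auto
    then have "card {0..m-1} \<le> card K" using finK by (intro card_mono) auto
    then show "m \<le> card K" using m by simp
  next
    assume c: "m \<le> card K"
    show "P (L ! (m - 1))"
    proof (rule ccontr)
      assume np: "\<not> P (L ! (m - 1))"
      have "K \<subseteq> {0..<m-1}"
      proof
        fix j assume j: "j \<in> K"
        show "j \<in> {0..<m-1}"
        proof (rule ccontr)
          assume "j \<notin> {0..<m-1}"
          then have "m - 1 \<le> j" by simp
          then have "m - 1 \<in> K" using downK j by blast
          then show False using np by (simp add: K_def)
        qed
      qed
      then have "card K \<le> m - 1" using card_mono[of "{0..<m-1}" K] by simp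
      then show False using c m by simp
    qed
  qed
  then show ?thesis using os cnt cK by simp
qed


context prob_space
begin

lemma count_set_eq:
  fixes X :: "nat \<Rightarrow> 'a \<Rightarrow> real"
  assumes "finite I" "I \<noteq> {}"
  shows "{\<omega>\<in>space M. card {i\<in>I. X i \<omega> \<in> B} = j} =
    (\<Union>S\<in>{S. S \<subseteq> I \<and> card S = j}. \<Inter>i\<in>I. X i -` (if i \<in> S then B else - B) \<inter> space M)"
proof (intro set_eqI iffI)
  fix \<omega> assume w: "\<omega> \<in> {\<omega>\<in>space M. card {i\<in>I. X i \<omega> \<in> B} = j}"
  show "\<omega> \<in> (\<Union>S\<in>{S. S \<subseteq> I \<and> card S = j}. \<Inter>i\<in>I. X i -` (if i \<in> S then B else - B) \<inter> space M)"
    using w by (intro UN_I[of "{i\<in>I. X i \<omega> \<in> B}"]) auto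
next
  fix \<omega> assume w: "\<omega> \<in> (\<Union>S\<in>{S. S \<subseteq> I \<and> card S = j}. \<Inter>i\<in>I. X i -` (if i \<in> S then B else - B) \<inter> space M)"
  then obtain S where S: "S \<subseteq> I" "card S = j" and wS: "\<omega> \<in> (\<Inter>i\<in>I. X i -` (if i \<in> S then B else - B) \<inter> space M)"
    by blast
  have sp: "\<omega> \<in> space M" using wS assms by auto
  have "{i\<in>I. X i \<omega> \<in> B} = S"
  proof (intro set_eqI iffI)
    fix i assume "i \<in> {i\<in>I. X i \<omega> \<in> B}"
    then show "i \<in> S" using wS by (auto split: if_splits)
  next
    fix i assume iS: "i \<in> S"
    then have iI: "i \<in> I" using S by auto
    then have "\<omega> \<in> X i -` (if i \<in> S then B else - B) \<inter> space M" using wS by blast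
    then show "i \<in> {i\<in>I. X i \<omega> \<in> B}" using iS iI by simp
  qed
  then show "\<omega> \<in> {\<omega>\<in>space M. card {i\<in>I. X i \<omega> \<in> B} = j}" using sp S by simp
qed

lemma count_sets:
  fixes X :: "nat \<Rightarrow> 'a \<Rightarrow> real"
  assumes "finite I" "I \<noteq> {}" "\<And>i. i \<in> I \<Longrightarrow> X i \<in> borel_measurable M" "B \<in> sets borel"
  shows "{\<omega>\<in>space M. card {i\<in>I. X i \<omega> \<in> B} = j} \<in> events"
  unfolding count_set_eq[OF assms(1,2)]
proof (intro sets.finite_UN sets.finite_INT)
  show "finite {S. S \<subseteq> I \<and> card S = j}" using assms(1) by simp
  show "finite I" "I \<noteq> {}" by (fact assms)+
  fix S i assume "i \<in> I"
  then show "X i -` (if i \<in> S then B else - B) \<inter> space M \<in> events"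
    using assms by (intro measurable_sets[of _ M borel]) auto
qed

lemma count_prob:
  fixes X :: "nat \<Rightarrow> 'a \<Rightarrow> real"
  assumes ind: "indep_vars (\<lambda>_. borel) X I" and I: "finite I" "I \<noteq> {}" and B: "B \<in> sets borel"
    and p: "\<And>i. i \<in> I \<Longrightarrow> prob (X i -` B \<inter> space M) = p"
  shows "prob {\<omega>\<in>space M. card {i\<in>I. X i \<omega> \<in> B} = j} = real (card I choose j) * p^j * (1-p)^(card I - j)"
proof -
  have meas: "X i \<in> borel_measurable M" if "i \<in> I" for i
    using ind that by (auto simp: indep_vars_def)
  define E where "E S = (\<Inter>i\<in>I. X i -` (if i \<in> S then B else - B) \<inter> space M)" for S
  have Eev: "E S \<in> events" for S
    unfolding E_def using I meas B by (intro sets.finite_INT measurable_sets[of _ M borel]) auto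
  have pc: "prob (X i -` (- B) \<inter> space M) = 1 - p" if "i \<in> I" for i
  proof -
    have "X i -` (- B) \<inter> space M = space M - (X i -` B \<inter> space M)" by auto
    moreover have "X i -` B \<inter> space M \<in> events" using meas[OF that] B by (rule measurable_sets)
    ultimately show ?thesis using prob_compl p[OF that] by simp
  qed
  have pE: "prob (E S) = p ^ card S * (1-p) ^ (card I - card S)" if S: "S \<subseteq> I" for S
  proof -
    have "prob (E S) = (\<Prod>i\<in>I. prob (X i -` (if i \<in> S then B else - B) \<inter> space M))"
      unfolding E_def using ind I B by (intro indep_varsD) auto
    also have "\<dots> = (\<Prod>i\<in>I. if i \<in> S then p else 1 - p)"
      using p pc by (intro prod.cong) auto
    also have "\<dots> = (\<Prod>i\<in>I \<inter> {i. i \<in> S}. p) * (\<Prod>i\<in>I \<inter> - {i. i \<in> S}. 1 - p)"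
      using prod.If_cases[OF I(1), of "\<lambda>i. i \<in> S" "\<lambda>_. p" "\<lambda>_. 1 - p"] by simp
    also have "\<dots> = p ^ card S * (1-p) ^ (card I - card S)"
    proof -
      have e1: "I \<inter> {i. i \<in> S} = S" using S by auto
      have "I \<inter> - {i. i \<in> S} = I - S" by auto
      then have e2: "card (I \<inter> - {i. i \<in> S}) = card I - card S" using S I by (simp add: card_Diff_subset finite_subset)
      show ?thesis unfolding prod_constant e1 e2 ..
    qed
    finally show ?thesis .
  qed
  have disj: "disjoint_family_on E {S. S \<subseteq> I \<and> card S = j}"
  proof (unfold disjoint_family_on_def, intro ballI impI)
    fix S Tv assume ST: "S \<in> {S. S \<subseteq> I \<and> card S = j}" "Tv \<in> {S. S \<subseteq> I \<and> card S = j}" "S \<noteq> Tv"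
    show "E S \<inter> E Tv = {}"
    proof (rule ccontr)
      assume "E S \<inter> E Tv \<noteq> {}"
      then obtain \<omega> where w: "\<omega> \<in> E S" "\<omega> \<in> E Tv" by blast
      have "i \<in> S \<longleftrightarrow> i \<in> Tv" if "i \<in> I" for i
        using w that by (auto simp: E_def split: if_splits)
      then have "S = Tv" using ST by blast
      then show False using ST by simp
    qed
  qed
  have "prob {\<omega>\<in>space M. card {i\<in>I. X i \<omega> \<in> B} = j} = prob (\<Union>S\<in>{S. S \<subseteq> I \<and> card S = j}. E S)"
    unfolding count_set_eq[OF I] E_def ..
  also have "\<dots> = (\<Sum>S\<in>{S. S \<subseteq> I \<and> card S = j}. prob (E S))"
    using I Eev disj by (intro finite_measure_finite_Union) auto
  also have "\<dots> = (\<Sum>S\<in>{S. S \<subseteq> I \<and> card S = j}. p ^ j * (1-p) ^ (card I - j))"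
    using pE by (intro sum.cong) auto
  also have "\<dots> = real (card I choose j) * (p ^ j * (1-p) ^ (card I - j))"
    using n_subsets[OF I(1), of j] by simp
  finally show ?thesis by simp
qed

lemma count_ge_eq:
  fixes X :: "nat \<Rightarrow> 'a \<Rightarrow> real"
  assumes "finite I"
  shows "{\<omega>\<in>space M. m \<le> card {i\<in>I. X i \<omega> \<in> B}} = (\<Union>j\<in>{m..card I}. {\<omega>\<in>space M. card {i\<in>I. X i \<omega> \<in> B} = j})"
proof -
  have "card {i\<in>I. X i \<omega> \<in> B} \<le> card I" for \<omega> using assms by (intro card_mono) auto
  then show ?thesis by auto
qed

lemma count_ge_sets:
  fixes X :: "nat \<Rightarrow> 'a \<Rightarrow> real"
  assumes "finite I" "I \<noteq> {}" "\<And>i. i \<in> I \<Longrightarrow> X i \<in> borel_measurable M" "B \<in> sets borel"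
  shows "{\<omega>\<in>space M. m \<le> card {i\<in>I. X i \<omega> \<in> B}} \<in> events"
  unfolding count_ge_eq[OF assms(1)] using count_sets[OF assms] by auto

lemma count_ge_prob:
  fixes X :: "nat \<Rightarrow> 'a \<Rightarrow> real"
  assumes ind: "indep_vars (\<lambda>_. borel) X I" and I: "finite I" "I \<noteq> {}" and B: "B \<in> sets borel"
    and p: "\<And>i. i \<in> I \<Longrightarrow> prob (X i -` B \<inter> space M) = p"
  shows "prob {\<omega>\<in>space M. m \<le> card {i\<in>I. X i \<omega> \<in> B}} = Gb (card I) m p"
proof -
  have meas: "X i \<in> borel_measurable M" if "i \<in> I" for i
    using ind that by (auto simp: indep_vars_def)
  have "prob {\<omega>\<in>space M. m \<le> card {i\<in>I. X i \<omega> \<in> B}} = (\<Sum>j\<in>{m..card I}. prob {\<omega>\<in>space M. card {i\<in>I. X i \<omega> \<in> B} = j})"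
    unfolding count_ge_eq[OF I(1)]
    using count_sets[OF I meas B]
    by (intro finite_measure_finite_Union) (auto simp: disjoint_family_on_def)
  also have "\<dots> = Gb (card I) m p"
    unfolding Gb_def using count_prob[OF ind I B p] by (intro sum.cong) auto
  finally show ?thesis .
qed

end

lemma (in real_distribution) cdf_level_measure:
  assumes cont: "continuous_on UNIV (cdf M)" and u: "0 < u" "u < 1"
  shows "measure M {x. cdf M x \<le> u} = u"
proof -
  define F where "F = cdf M"
  define S where "S = {x. F x \<le> u}"
  have "eventually (\<lambda>x. F x < u) at_bot"
    using order_tendstoD(2)[OF cdf_lim_at_bot u(1)] unfolding F_def .
  then obtain a where a: "\<And>x. x \<le> a \<Longrightarrow> F x < u" by (auto simp: eventually_at_bot_linorder)
  have "eventually (\<lambda>x. F x > u) at_top"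
    using order_tendstoD(1)[OF cdf_lim_at_top_prob u(2)] unfolding F_def .
  then obtain b where b: "\<And>x. x \<ge> b \<Longrightarrow> F x > u" by (auto simp: eventually_at_top_linorder)
  have cl: "closed S" unfolding S_def F_def using cont by (intro closed_Collect_le) auto
  have ne: "S \<noteq> {}" using a[of a] unfolding S_def by (metis empty_iff less_imp_le mem_Collect_eq order_refl)
  have ub: "x < b" if "x \<in> S" for x using b[of x] that by (force simp: S_def)
  have bdd: "bdd_above S" using ub by (meson bdd_aboveI less_imp_le)
  define s where "s = Sup S"
  have sS: "s \<in> S" unfolding s_def using closed_contains_Sup[OF ne bdd cl] .
  have Seq: "S = {..s}"
  proof (intro set_eqI iffI)
    fix x assume "x \<in> S" then show "x \<in> {..s}" unfolding s_def using bdd by (auto intro: cSup_upper)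
  next
    fix x assume "x \<in> {..s}"
    then have "F x \<le> F s" unfolding F_def by (auto intro: cdf_nondecreasing)
    then show "x \<in> S" using sS by (auto simp: S_def)
  qed
  have Fs: "F s = u"
  proof -
    have "s < b" using ub sS by simp
    have "F s \<le> u" "u \<le> F b" using sS b[of b] by (auto simp: S_def)
    moreover have "continuous_on {s..b} F" using cont unfolding F_def by (rule continuous_on_subset) auto
    ultimately obtain c where c: "s \<le> c" "c \<le> b" "F c = u" using IVT'[of F s u b] \<open>s < b\<close> by auto
    then have "c \<in> S" by (simp add: S_def)
    then have "c \<le> s" using Seq by auto
    with c show ?thesis by simp
  qed
  have "measure M {x. cdf M x \<le> u} = measure M {..s}" using Seq by (simp add: S_def F_def)
  also have "\<dots> = u" using Fs by (simp add: F_def cdf_def2)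
  finally show ?thesis .
qed


theorem theorem1:
  fixes M :: "'a measure"
    and Y :: "'a \<Rightarrow> real"
    and X :: "nat \<Rightarrow> 'a \<Rightarrow> real"
    and F :: "real \<Rightarrow> real"
    and \<gamma> \<epsilon> \<rho> :: real
    and n1 n2 N :: nat
    and k :: int
  assumes "prob_space M"
    and "Y \<in> borel_measurable M"
    and F_def: "F = cdf (distr M borel Y)"
    and F_cont: "continuous_on UNIV F"
    and "0 < \<gamma>" "\<gamma> < 1"
    and "0 < n1" "0 < n2" "coprime n1 n2" "\<gamma> = real n1 / real n2"
    and "0 < \<epsilon>" "\<epsilon> < 1" "0 < \<rho>" "\<rho> < 1"
    and "4 * \<gamma> * (1 - \<gamma>) > 9 * \<rho> * \<epsilon>\<^sup>2"
    and "6 * \<rho> \<le> 1"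
    and k_def: "k = \<lceil>(1 / real n2) * ((4 * \<gamma> * (1 - \<gamma>)) / (9 * \<rho> * \<epsilon>\<^sup>2) - 1)\<rceil>"
    and N_def: "int N = k * int n2 - 1"
    and X_meas: "\<And>i. i \<in> {1..N} \<Longrightarrow> X i \<in> borel_measurable M"
    and X_indep: "prob_space.indep_vars M (\<lambda>_. borel) X {1..N}"
    and X_distr: "\<And>i. i \<in> {1..N} \<Longrightarrow> distr M borel (X i) = distr M borel Y"
  shows "measure M {\<omega> \<in> space M.
           \<bar>F (order_stat (\<lambda>i. X i \<omega>) N (nat \<lfloor>real N * \<gamma>\<rfloor> + 1)) - \<gamma>\<bar> \<le> \<epsilon>} \<ge> 1 - \<rho>"
proof -
  interpret prob_space M by fact
  define m where "m = nat \<lfloor>real N * \<gamma>\<rfloor> + 1"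
  have par: "1 \<le> m" "m \<le> N" "\<gamma> = real m / real (Suc N)"
    "\<gamma> * (1 - \<gamma>) / real (N + 2) \<le> 3/8 * \<epsilon>^2"
    "((modeb N m - \<gamma>) / \<epsilon>)^2 \<le> 3/4"
    "4/9 * (\<gamma> * (1 - \<gamma>) / real (N + 2)) / \<epsilon>^2 \<le> \<rho>"
    using params[OF assms(5-8) assms(10-11) assms(13) assms(15-18)] unfolding m_def by auto
  define \<mu> where "\<mu> = distr M borel Y"
  interpret D: real_distribution \<mu> unfolding \<mu>_def using assms(2) by simp
  have F\<mu>: "F = cdf \<mu>" by (simp add: F_def \<mu>_def)
  have Fmono: "F a \<le> F b" if "a \<le> b" for a b unfolding F\<mu> using that by (rule D.cdf_nondecreasing)
  have F01: "0 \<le> F x" "F x \<le> 1" for x unfolding F\<mu> by (auto intro: D.cdf_nonneg D.cdf_bounded_prob)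
  have Fmeas: "F \<in> borel_measurable borel" using F_cont by (rule borel_measurable_continuous_onI)
  have Ble: "{x. F x \<le> u} \<in> sets borel" for u
  proof -
    have "F -` {..u} \<inter> space borel \<in> sets borel" using Fmeas by (rule measurable_sets) simp
    moreover have "F -` {..u} \<inter> space borel = {x. F x \<le> u}" by auto
    ultimately show ?thesis by simp
  qed
  have Blt: "{x. F x < u} \<in> sets borel" for u
  proof -
    have "F -` {..<u} \<inter> space borel \<in> sets borel" using Fmeas by (rule measurable_sets) simp
    moreover have "F -` {..<u} \<inter> space borel = {x. F x < u}" by auto
    ultimately show ?thesis by simp
  qed
  define I where "I = {1..N}"
  have I: "finite I" "I \<noteq> {}" "card I = N" using par by (auto simp: I_def)
  have meas: "X i \<in> borel_measurable M" if "i \<in> I" for i using X_meas that by (simp add: I_def)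
  have ind: "indep_vars (\<lambda>_. borel) X I" using X_indep by (simp add: I_def)
  have pu: "prob (X i -` {x. F x \<le> u} \<inter> space M) = u" if "i \<in> I" "0 < u" "u < 1" for i u
  proof -
    have "prob (X i -` {x. F x \<le> u} \<inter> space M) = measure (distr M borel (X i)) {x. F x \<le> u}"
      using measure_distr[OF meas[OF that(1)] Ble[of u]] by simp
    also have "\<dots> = measure \<mu> {x. cdf \<mu> x \<le> u}" using X_distr that(1) by (simp add: I_def \<mu>_def F\<mu>)
    also have "\<dots> = u" using D.cdf_level_measure F_cont that(2,3) unfolding F\<mu> by blast
    finally show ?thesis .
  qed
  define os where "os \<omega> = order_stat (\<lambda>i. X i \<omega>) N m" for \<omega>
  have eqle: "{\<omega>\<in>space M. F (os \<omega>) \<le> u} = {\<omega>\<in>space M. m \<le> card {i\<in>I. X i \<omega> \<in> {x. F x \<le> u}}}" for u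
  proof -
    have "F (os \<omega>) \<le> u \<longleftrightarrow> m \<le> card {i\<in>I. X i \<omega> \<in> {x. F x \<le> u}}" for \<omega>
      unfolding os_def I_def
      using order_stat_iff[of "\<lambda>x. F x \<le> u" m N "\<lambda>i. X i \<omega>"] Fmono par(1,2) by force
    then show ?thesis by auto
  qed
  have eqlt: "{\<omega>\<in>space M. F (os \<omega>) < u} = {\<omega>\<in>space M. m \<le> card {i\<in>I. X i \<omega> \<in> {x. F x < u}}}" for u
  proof -
    have "F (os \<omega>) < u \<longleftrightarrow> m \<le> card {i\<in>I. X i \<omega> \<in> {x. F x < u}}" for \<omega>
      unfolding os_def I_def
      using order_stat_iff[of "\<lambda>x. F x < u" m N "\<lambda>i. X i \<omega>"] Fmono par(1,2) by force
    then show ?thesis by auto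
  qed
  have ev_le: "{\<omega>\<in>space M. F (os \<omega>) \<le> u} \<in> events" for u
    unfolding eqle using count_ge_sets[OF I(1,2) meas Ble[of u], where m=m] by simp
  have ev_lt: "{\<omega>\<in>space M. F (os \<omega>) < u} \<in> events" for u
    unfolding eqlt using count_ge_sets[OF I(1,2) meas Blt[of u], where m=m] by simp
  have prob_le: "prob {\<omega>\<in>space M. F (os \<omega>) \<le> u} = Gb N m u" if "0 < u" "u < 1" for u
  proof -
    have "prob {\<omega>\<in>space M. m \<le> card {i\<in>I. X i \<omega> \<in> {x. F x \<le> u}}} = Gb (card I) m u"
      by (rule count_ge_prob[OF ind I(1,2) Ble[of u]]) (use pu that in auto)
    then show ?thesis unfolding eqle I(3) .
  qed
  define a where "a = \<gamma> - \<epsilon>"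
  define b where "b = \<gamma> + \<epsilon>"
  define L where "L = {\<omega>\<in>space M. F (os \<omega>) < a}"
  define R where "R = space M - {\<omega>\<in>space M. F (os \<omega>) \<le> b}"
  have Lev: "L \<in> events" unfolding L_def by (rule ev_lt)
  have Rev: "R \<in> events" unfolding R_def using ev_le by blast
  have Teq: "{\<omega> \<in> space M. \<bar>F (os \<omega>) - \<gamma>\<bar> \<le> \<epsilon>} = space M - (L \<union> R)"
    by (auto simp: L_def R_def a_def b_def abs_le_iff)
  have pL: "prob L \<le> (if 0 < a then Gb N m a else 0)"
  proof (cases "0 < a")
    case True
    have a1: "a < 1" using assms(6,11) by (simp add: a_def)
    have "prob L \<le> prob {\<omega>\<in>space M. F (os \<omega>) \<le> a}"
      unfolding L_def by (intro finite_measure_mono ev_le) auto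
    then show ?thesis using prob_le[OF True a1] True by simp
  next
    case False
    then have "\<not> F (os \<omega>) < a" for \<omega> using F01(1)[of "os \<omega>"] by linarith
    then have "L = {}" by (auto simp: L_def)
    then show ?thesis using False by simp
  qed
  have pR: "prob R = (if b < 1 then 1 - Gb N m b else 0)"
  proof (cases "b < 1")
    case True
    have b0: "0 < b" using assms(5,11) by (simp add: b_def)
    have "prob R = 1 - prob {\<omega>\<in>space M. F (os \<omega>) \<le> b}" unfolding R_def by (rule prob_compl[OF ev_le])
    then show ?thesis using prob_le[OF b0 True] True by simp
  next
    case False
    then have "F (os \<omega>) \<le> b" for \<omega> using F01(2)[of "os \<omega>"] by linarith
    then have "R = {}" by (auto simp: R_def)
    then show ?thesis using False by simp
  qed
  have "prob (L \<union> R) \<le> prob L + prob R"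
    using Lev Rev by (intro measure_subadditive) (auto simp: emeasure_eq_measure)
  moreover have "prob (space M - (L \<union> R)) = 1 - prob (L \<union> R)" using Lev Rev by (intro prob_compl) auto
  moreover have "(if 0 < a then Gb N m a else 0) + (if b < 1 then 1 - Gb N m b else 0) \<le> \<rho>"
    using analytic_main[OF par(1,2,3) assms(11) par(5,4)] par(6) unfolding a_def b_def by linarith
  ultimately have "prob (space M - (L \<union> R)) \<ge> 1 - \<rho>" using pL pR by linarith
  then show ?thesis unfolding Teq[symmetric] os_def m_def .
qed


end
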